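(* Let $\xi>0$ with $\xi\neq1$, $\omega_0>0$, and define $\omega^2(k)=\frac{\omega_0^2}{\xi^2}\big((\xi-\cos k)^2+\sin^2 k\big)$, $\Omega_0=\frac{\omega_0}{\xi}|1-\xi|$, $\Omega_D=\frac{\omega_0}{\xi}(1+\xi)$, and for an integer $n$ and real $\omega$ with $\omega^2(k)\ne\omega^2$ for all $k$, $$\mathcal G_n(\omega)=\frac{1}{2\pi}\int_0^{2\pi}\frac{e^{ikn}}{\omega^2(k)-\omega^2}\,dk .$$ Then for $0\le\omega<\Omega_0$ and every integer $n$, $$\mathcal G_n(\omega)=\frac{1}{\sqrt{(\Omega_D^2-\omega^2)(\Omega_0^2-\omega^2)}}\left(\frac{\Omega_D^2+\Omega_0^2-2\omega^2-2\sqrt{(\Omega_D^2-\omega^2)(\Omega_0^2-\omega^2)}}{\Omega_D^2-\Omega_0^2}\right)^{|n|},$$ which is real-valued.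
   Context: $\mathcal G_n$ is the frequency-domain lattice Green's function (entry with $|p-q|=n$) of the exponentially graded linear chain (masses $m_0\xi^{2p}$, spring constants $m_0\xi^{2p}\omega_0^2$) in the limit of infinitely many particles, in the symmetrized variables $y_p=\xi^pu_p$; $\Omega_0$ and $\Omega_D$ are the lowest and highest eigenfrequencies. *)

theory Defs
  imports "HOL-Analysis.Analysis"
begin

definition omega_sq :: "real \<Rightarrow> real \<Rightarrow> real \<Rightarrow> real" where
  "omega_sq xi w0 k = (w0^2 / xi^2) * ((xi - cos k)^2 + (sin k)^2)"

definition Omega_0 :: "real \<Rightarrow> real \<Rightarrow> real" where
  "Omega_0 xi w0 = (w0 / xi) * \<bar>1 - xi\<bar>"

definition Omega_D :: "real \<Rightarrow> real \<Rightarrow> real" where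
  "Omega_D xi w0 = (w0 / xi) * (1 + xi)"

definition G_lat :: "real \<Rightarrow> real \<Rightarrow> int \<Rightarrow> real \<Rightarrow> complex" where
  "G_lat xi w0 n w = complex_of_real (1 / (2 * pi)) *
     integral {0..2*pi} (\<lambda>k. cis (k * real_of_int n) / complex_of_real (omega_sq xi w0 k - w^2))"

end

theory Submission
  imports Defs
begin

lemma int_cis:
  fixes j :: int
  shows "integral {0..2*pi} (\<lambda>k. cis (k * of_int j)) = (if j = 0 then of_real (2*pi) else 0)"
proof (cases "j = 0")
  case True
  then show ?thesis by (simp add: scaleR_conv_of_real)
next
  case False
  have d: "\<And>x. ((\<lambda>k. cis (k * of_int j)) has_vector_derivative (of_int j * \<i> * cis (x * of_int j))) (at x within {0..2*pi})"
    unfolding has_vector_derivative_def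
    by (rule has_derivative_eq_rhs, rule has_derivative_cis, rule derivative_eq_intros, rule derivative_eq_intros)
       (auto simp: fun_eq_iff scaleR_conv_of_real algebra_simps)
  have "((\<lambda>x. of_int j * \<i> * cis (x * of_int j)) has_integral (cis (2*pi * of_int j) - cis (0 * of_int j))) {0..2*pi}"
    by (rule fundamental_theorem_of_calculus) (use d in auto)
  moreover have "cis (2*pi * of_int j) - cis (0 * of_int j) = 0" by simp
  ultimately have "integral {0..2*pi} (\<lambda>x. of_int j * \<i> * cis (x * of_int j)) = 0"
    using integral_unique by metis
  then have "of_int j * \<i> * integral {0..2*pi} (\<lambda>x. cis (x * of_int j)) = 0"
    by (simp add: mult.assoc)
  with False show ?thesis by simp
qed


lemma geo_int:
  fixes r :: real and s :: int
  assumes r0: "0 < r" and r1: "r < 1" and s: "s = 1 \<or> s = -1"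
  shows "integral {0..2*pi} (\<lambda>k. cis (k * of_int (s*m)) / (1 - of_real r * cis (k * of_int s)))
         = (if m \<le> 0 then of_real (2*pi*r^nat(-m)) else 0)"
proof -
  define I where "I = (\<lambda>m::int. integral {0..2*pi} (\<lambda>k. cis (k * of_int (s*m)) / (1 - of_real r * cis (k * of_int s))))"
  have nd: "norm (1 - of_real r * cis x) \<ge> 1 - r" for x
  proof -
    have "norm (1::complex) - norm (of_real r * cis x) \<le> norm (1 - of_real r * cis x)"
      by (rule norm_triangle_ineq2)
    then show ?thesis using r0 by (simp add: norm_mult)
  qed
  have den: "1 - of_real r * cis x \<noteq> 0" for x
    using nd[of x] r1 by auto
  have integ: "(\<lambda>k. cis (k * of_int (s*m)) / (1 - of_real r * cis (k * of_int s))) integrable_on {0..2*pi}" for m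
    by (rule integrable_continuous_interval) (intro continuous_intros, use den in auto)
  have bnd: "norm (I m) \<le> 2*pi/(1-r)" for m
  proof -
    have "norm (I m) \<le> (1/(1-r)) * Henstock_Kurzweil_Integration.content (cbox 0 (2*pi))"
      unfolding I_def
    proof (rule has_integral_bound)
      show "0 \<le> 1/(1-r)" using r1 by simp
      show "((\<lambda>k. cis (k * of_int (s*m)) / (1 - of_real r * cis (k * of_int s))) has_integral
             integral {0..2*pi} (\<lambda>k. cis (k * of_int (s*m)) / (1 - of_real r * cis (k * of_int s)))) (cbox 0 (2*pi))"
        using integrable_integral[OF integ[of m]] by simp
      fix x
      have "norm (cis (x * of_int (s*m)) / (1 - of_real r * cis (x * of_int s))) = 1 / norm (1 - of_real r * cis (x * of_int s))"
        by (simp add: norm_divide)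
      also have "\<dots> \<le> 1/(1-r)"
        using nd[of "x * of_int s"] r1 by (intro divide_left_mono) (auto intro!: mult_pos_pos)
      finally show "norm (cis (x * of_int (s*m)) / (1 - of_real r * cis (x * of_int s))) \<le> 1/(1-r)" .
    qed
    then show ?thesis by simp
  qed
  have rec: "I m = of_real r * I (m+1) + (if m = 0 then of_real (2*pi) else 0)" for m
  proof -
    have "I m - of_real r * I (m+1) = integral {0..2*pi} (\<lambda>k. cis (k * of_int (s*m)) / (1 - of_real r * cis (k * of_int s))
            - of_real r * (cis (k * of_int (s*(m+1))) / (1 - of_real r * cis (k * of_int s))))"
      unfolding I_def
      by (simp only: integral_diff[OF integ integrable_on_mult_right[OF integ]] integral_mult_right)
    also have "\<dots> = integral {0..2*pi} (\<lambda>k. cis (k * of_int (s*m)))"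
    proof (rule integral_cong)
      fix k
      have "cis (k * of_int (s*(m+1))) = cis (k * of_int (s*m)) * cis (k * of_int s)"
        by (simp add: cis_mult algebra_simps)
      then show "cis (k * of_int (s*m)) / (1 - of_real r * cis (k * of_int s))
            - of_real r * (cis (k * of_int (s*(m+1))) / (1 - of_real r * cis (k * of_int s))) = cis (k * of_int (s*m))" (is ?thesis1)
      proof -
        have gen: "\<And>a b::complex. 1 - of_real r * b \<noteq> 0 \<Longrightarrow> a/(1 - of_real r * b) - of_real r*((a*b)/(1 - of_real r * b)) = a"
          by (simp add: divide_simps) (simp add: algebra_simps)
        show ?thesis1 using gen[OF den[of "k * of_int s"], of "cis (k * of_int (s*m))"] \<open>cis (k * of_int (s*(m+1))) = _\<close>
          by simp
      qed
    qed
    also have "\<dots> = (if m = 0 then of_real (2*pi) else 0)"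
      using int_cis[of "s*m"] s by auto
    finally show ?thesis by (simp add: algebra_simps)
  qed
  have pos: "I m = 0" if "m \<ge> 1" for m
  proof -
    have it: "I m = of_real (r^N) * I (m + int N)" for N
    proof (induction N)
      case 0 then show ?case by simp
    next
      case (Suc N)
      have "I (m + int N) = of_real r * I (m + int N + 1)"
        using rec[of "m + int N"] that by simp
      then show ?case using Suc by (simp add: algebra_simps)
    qed
    have le: "norm (I m) \<le> r^N * (2*pi/(1-r))" for N
    proof -
      have "norm (I m) = r^N * norm (I (m + int N))" using it[of N] r0 by (simp add: norm_mult norm_power)
      also have "\<dots> \<le> r^N * (2*pi/(1-r))" using bnd r0 by (intro mult_left_mono) auto
      finally show ?thesis .
    qed
    have "(\<lambda>N. r^N * (2*pi/(1-r))) \<longlonglongrightarrow> 0 * (2*pi/(1-r))"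
      by (intro tendsto_intros LIMSEQ_power_zero) (use r0 r1 in auto)
    then have "norm (I m) \<le> 0"
      by (intro LIMSEQ_le_const[where X="\<lambda>N. r^N * (2*pi/(1-r))"]) (use le in auto)
    then show ?thesis by simp
  qed
  have z: "I 0 = of_real (2*pi)" using rec[of 0] pos[of 1] by simp
  have neg: "I (- int j) = of_real (2*pi*r^j)" for j
  proof (induction j)
    case 0 then show ?case using z by simp
  next
    case (Suc j)
    have "I (- int (Suc j)) = of_real r * I (- int j)"
      using rec[of "- int (Suc j)"] by simp
    then show ?case using Suc by (simp add: algebra_simps)
  qed
  show ?thesis
  proof (cases "m \<le> 0")
    case True
    then have "m = - int (nat (-m))" by simp
    then have "I m = of_real (2*pi*r^nat(-m))" using neg[of "nat (-m)"] by metis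
    then show ?thesis using True unfolding I_def by simp
  next
    case False then show ?thesis using pos[of m] unfolding I_def by simp
  qed
qed


lemma den_nz:
  fixes r :: real assumes "0 < r" "r < 1"
  shows "1 - of_real r * cis x \<noteq> 0"
proof
  assume "1 - of_real r * cis x = 0"
  then have "of_real r * cis x = 1" by simp
  then have "norm (of_real r * cis x) = norm (1::complex)" by simp
  then show False using assms by (simp add: norm_mult)
qed

lemma geo_integ:
  fixes r :: real and s m :: int
  assumes "0 < r" "r < 1"
  shows "(\<lambda>k. cis (k * of_int (s*m)) / (1 - of_real r * cis (k * of_int s))) integrable_on {0..2*pi}"
  by (rule integrable_continuous_interval) (intro continuous_intros, use den_nz[OF assms] in auto)

lemma pf:
  fixes z w :: complex and c r :: real
  assumes "z \<noteq> 0" "1 - of_real r * z \<noteq> 0" "1 - of_real r * inverse z \<noteq> 0" "c \<noteq> 0" "1 - r^2 \<noteq> 0"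
  shows "w / (of_real (c*(1+r^2)) - of_real (2*c*r) * ((z + inverse z)/2))
       = (1/of_real (c*(1-r^2))) * (w/(1 - of_real r*z) + of_real r*((w/z)/(1 - of_real r*inverse z)))"
proof -
  have e1: "1 - of_real r * inverse z = (z - of_real r) / z" using assms(1) by (simp add: field_simps)
  have e2: "z - of_real r \<noteq> 0" using assms(3) e1 by auto
  have c2: "(1::complex) - of_real r ^ 2 \<noteq> 0" using assms(5)
    by (metis of_real_1 of_real_diff of_real_eq_0_iff of_real_power)
  have d: "of_real (c*(1+r^2)) - of_real (2*c*r) * ((z + inverse z)/2) = of_real c * (1 - of_real r * z) * (z - of_real r) / z"
    using assms(1) by (simp add: field_simps power2_eq_square)
  have f1: "(w/z)/((z - of_real r)/z) = w/(z - of_real r)" using assms(1) by simp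
  have f2: "w/(1 - of_real r*z) + of_real r*(w/(z - of_real r)) = w * z * (1 - of_real r^2) / ((1 - of_real r*z)*(z - of_real r))"
    using assms(2) e2 by (simp add: divide_simps) (simp add: algebra_simps power2_eq_square)
  have f3: "(1/of_real (c*(1-r^2))) * (w * z * (1 - of_real r^2) / ((1 - of_real r*z)*(z - of_real r)))
       = w / (of_real c * (1 - of_real r * z) * (z - of_real r) / z)"
    using assms(1,2,4) e2 c2 by (simp add: divide_simps)
  show ?thesis unfolding e1 d f1 f2 f3 ..
qed


theorem mainTheorem2:
  fixes xi w0 w :: real and n :: int
  assumes "xi > 0" and "xi \<noteq> 1" and "w0 > 0"
    and "0 \<le> w" and "w < Omega_0 xi w0"
  shows "G_lat xi w0 n w =
    complex_of_real
      (1 / sqrt (((Omega_D xi w0)^2 - w^2) * ((Omega_0 xi w0)^2 - w^2)) *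
       (((Omega_D xi w0)^2 + (Omega_0 xi w0)^2 - 2 * w^2
          - 2 * sqrt (((Omega_D xi w0)^2 - w^2) * ((Omega_0 xi w0)^2 - w^2)))
        / ((Omega_D xi w0)^2 - (Omega_0 xi w0)^2)) ^ nat \<bar>n\<bar>)"
proof -
  define A where "A = w0^2*(1+xi^2)/xi^2 - w^2"
  define B where "B = 2*w0^2/xi"
  have hD: "(Omega_D xi w0)^2 - w^2 = A + B"
    unfolding Omega_D_def A_def B_def using assms(1) by (simp add: field_simps power2_eq_square)
  have h0: "(Omega_0 xi w0)^2 - w^2 = A - B"
    unfolding Omega_0_def A_def B_def using assms(1) by (simp add: power_mult_distrib field_simps power2_eq_square)
  have Bpos: "B > 0" unfolding B_def using assms by simp
  have w2: "w^2 < (Omega_0 xi w0)^2" using assms(4,5) by (simp add: power_strict_mono)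
  have AB: "A - B > 0" using h0 w2 by linarith
  have Apos: "A > 0" using AB Bpos by linarith
  define S where "S = sqrt ((A+B)*(A-B))"
  have Spos: "S > 0" unfolding S_def using AB Bpos by simp
  have S2: "S^2 = A^2 - B^2"
  proof -
    have "S^2 = (A+B)*(A-B)" unfolding S_def using AB Bpos by (intro real_sqrt_pow2) simp
    then show ?thesis by (simp add: power2_eq_square algebra_simps)
  qed
  have SA: "S < A"
  proof (rule power_less_imp_less_base[of _ 2])
    show "S^2 < A^2" using S2 Bpos by simp
  qed (use Apos in simp)
  have BS: "A - B < S"
  proof (rule power_less_imp_less_base[of _ 2])
    have "(A-B)^2 < (A-B)*(A+B)" using AB Bpos by (simp add: power2_eq_square)
    then show "(A-B)^2 < S^2" using S2 by (simp add: power2_eq_square algebra_simps)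
  qed (use Spos in simp)
  define r where "r = (A - S)/B"
  have r0: "0 < r" unfolding r_def using SA Bpos by simp
  have r1: "r < 1" unfolding r_def using BS Bpos by simp
  have rB: "r*B = A - S" unfolding r_def using Bpos by simp
  define c where "c = B/(2*r)"
  have k1: "B*(1+r^2) = 2*A*r"
  proof -
    have "B*(B*(1+r^2)) = B*(2*A*r)"
    proof -
      have "B*(B*(1+r^2)) = B^2 + (r*B)^2" by (simp add: algebra_simps power2_eq_square)
      also have "\<dots> = B^2 + (A-S)^2" using rB by simp
      also have "\<dots> = 2*A*(A-S)" using S2 by (simp add: algebra_simps power2_eq_square)
      also have "\<dots> = B*(2*A*r)" by (subst rB[symmetric]) (simp add: algebra_simps)
      finally show ?thesis .
    qed
    then show ?thesis using Bpos by simp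
  qed
  have k2: "B*(1-r^2) = 2*r*S"
  proof -
    have "B*(B*(1-r^2)) = B*(2*r*S)"
    proof -
      have "B*(B*(1-r^2)) = B^2 - (r*B)^2" by (simp add: algebra_simps power2_eq_square)
      also have "\<dots> = B^2 - (A-S)^2" using rB by simp
      also have "\<dots> = 2*S*(A-S)" using S2 by (simp add: algebra_simps power2_eq_square)
      also have "\<dots> = B*(2*r*S)" by (subst rB[symmetric]) (simp add: algebra_simps)
      finally show ?thesis .
    qed
    then show ?thesis using Bpos by simp
  qed
  have cA: "c*(1+r^2) = A" unfolding c_def using k1 r0 by (simp add: field_simps)
  have cB: "2*c*r = B" unfolding c_def using r0 by simp
  have cS: "c*(1-r^2) = S" unfolding c_def using k2 r0 by (simp add: field_simps)
  have cnz: "c \<noteq> 0" unfolding c_def using r0 Bpos by simp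
  have rnz: "1 - r^2 \<noteq> 0" using r0 r1 by (simp add: power2_eq_square) (smt (verit) mult_less_cancel_left1)
  define f1 where "f1 = (\<lambda>k. cis (k * of_int (1*n)) / (1 - of_real r * cis (k * of_int 1)))"
  define f2 where "f2 = (\<lambda>k. cis (k * of_int ((-1)*(1-n))) / (1 - of_real r * cis (k * of_int (-1))))"
  have pw: "cis (k * of_int n) / complex_of_real (omega_sq xi w0 k - w^2)
      = (1/of_real S) * (f1 k + of_real r * f2 k)" for k
  proof -
    have om: "omega_sq xi w0 k - w^2 = A - B * cos k"
    proof -
      have "(xi - cos k)^2 + (sin k)^2 = xi^2 - 2*xi*cos k + 1"
        using sin_cos_squared_add[of k] by (simp add: power2_eq_square algebra_simps)
      then show ?thesis unfolding omega_sq_def A_def B_def using assms(1)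
        by (simp add: field_simps power2_eq_square)
    qed
    have cz: "complex_of_real (cos k) = (cis k + inverse (cis k))/2"
      by (simp add: complex_eq_iff)
    have dd: "complex_of_real (omega_sq xi w0 k - w^2) = of_real (c*(1+r^2)) - of_real (2*c*r) * ((cis k + inverse (cis k))/2)"
      unfolding om cA cB by (simp add: cz)
    have p: "cis (k * of_int n) / (of_real (c*(1+r^2)) - of_real (2*c*r) * ((cis k + inverse (cis k))/2))
       = (1/of_real (c*(1-r^2))) * (cis (k * of_int n)/(1 - of_real r*cis k) + of_real r*((cis (k * of_int n)/cis k)/(1 - of_real r*inverse (cis k))))"
      by (rule pf) (use den_nz[OF r0 r1, of k] den_nz[OF r0 r1, of "-k"] cnz rnz in auto)
    have e1: "cis (k * of_int n)/cis k = cis (k * of_int ((-1)*(1-n)))"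
      by (simp add: cis_divide algebra_simps)
    have e2: "inverse (cis k) = cis (k * of_int (-1))" by simp
    have "cis (k * of_int n) / complex_of_real (omega_sq xi w0 k - w^2)
       = cis (k * of_int n) / (of_real (c*(1+r^2)) - of_real (2*c*r) * ((cis k + inverse (cis k))/2))"
      by (simp only: dd)
    also have "\<dots> = (1/of_real (c*(1-r^2))) * (cis (k * of_int n)/(1 - of_real r*cis k) + of_real r*((cis (k * of_int n)/cis k)/(1 - of_real r*inverse (cis k))))"
      by (rule p)
    also have "\<dots> = (1/of_real S) * (f1 k + of_real r * f2 k)"
      unfolding e1 e2 cS f1_def f2_def by simp
    finally show ?thesis .
  qed
  have i1: "f1 integrable_on {0..2*pi}" unfolding f1_def by (rule geo_integ[OF r0 r1])
  have i2: "f2 integrable_on {0..2*pi}" unfolding f2_def by (rule geo_integ[OF r0 r1])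
  have I1: "integral {0..2*pi} f1 = (if n \<le> 0 then of_real (2*pi*r^nat(-n)) else 0)"
    unfolding f1_def using geo_int[OF r0 r1, of 1 n] by simp
  have I2: "integral {0..2*pi} f2 = (if 1 - n \<le> 0 then of_real (2*pi*r^nat(-(1-n))) else 0)"
    unfolding f2_def using geo_int[OF r0 r1, of "-1" "1-n"] by simp
  have int: "integral {0..2*pi} (\<lambda>k. cis (k * of_int n) / complex_of_real (omega_sq xi w0 k - w^2))
     = (1/of_real S) * (integral {0..2*pi} f1 + of_real r * integral {0..2*pi} f2)"
    unfolding pw
    by (simp only: integral_mult_right integral_add[OF i1 integrable_on_mult_right[OF i2]])
  have fin: "integral {0..2*pi} f1 + of_real r * integral {0..2*pi} f2 = of_real (2*pi*r^nat \<bar>n\<bar>)"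
  proof (cases "n \<le> 0")
    case True then show ?thesis unfolding I1 I2 by simp
  next
    case False
    then have "nat \<bar>n\<bar> = Suc (nat (n - 1))" by simp
    then show ?thesis unfolding I1 I2 using False by simp
  qed
  have rhs1: "sqrt (((Omega_D xi w0)^2 - w^2) * ((Omega_0 xi w0)^2 - w^2)) = S"
    unfolding hD h0 S_def ..
  have rhs2: "((Omega_D xi w0)^2 + (Omega_0 xi w0)^2 - 2 * w^2 - 2 * S) / ((Omega_D xi w0)^2 - (Omega_0 xi w0)^2) = r"
  proof -
    have "(Omega_D xi w0)^2 + (Omega_0 xi w0)^2 - 2 * w^2 = 2*A" using hD h0 by linarith
    moreover have "(Omega_D xi w0)^2 - (Omega_0 xi w0)^2 = 2*B" using hD h0 by linarith
    moreover have "(2 * A - 2 * S) / (2 * B) = (A - S) / B" using Bpos by (simp add: field_simps)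
    ultimately show ?thesis unfolding r_def by simp
  qed
  show ?thesis
    unfolding G_lat_def int fin rhs1 rhs2 using Spos
    by (simp add: field_simps)
qed

end
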